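(* Let $N \ge 2$ and let $\alpha = (\alpha_1,\dots,\alpha_N) : \mathbb{R}^{3N} \to \mathbb{R}^N$ be a $C^\infty$ map. Then the sortlet $\Psi_\alpha : \mathbb{R}^{3N} \to \mathbb{R}$ (defined in the context) is continuously once-differentiable on $\mathbb{R}^{3N}$, i.e. all first partial derivatives $\partial \Psi_\alpha / \partial r^i$ exist and are continuous on $\mathbb{R}^{3N}$.
   Context: Write points of $\mathbb{R}^{3N}$ as $r = (r_1,\dots,r_N)$ with $r_i \in \mathbb{R}^3$. Sortlet: at a configuration $r$ where the values $\alpha_1(r),\dots,\alpha_N(r)$ are pairwise distinct, let $\pi_\alpha$ be the unique permutation of $\{1,\dots,N\}$ with $\alpha_{\pi_\alpha(1)}(r) < \dots < \alpha_{\pi_\alpha(N)}(r)$ (the permutation sorting $\alpha(r)$), and set $$\Psi_\alpha(r) = \sigma(\pi_\alpha) \prod_{i=1}^{N-1} \big(\alpha_{\pi_\alpha(i+1)}(r) - \alpha_{\pi_\alpha(i)}(r)\big),$$ where $\sigma(\pi) \in \{+1,-1\}$ is the sign (parity) of $\pi$. At configurations where two of the values $\alpha_i(r)$ coincide, the product of consecutive sorted differences vanishes and $\Psi_\alpha(r) = 0$. *)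

theory Defs
  imports "HOL-Analysis.Analysis"
begin

fun Ck :: "nat \<Rightarrow> ('a::euclidean_space \<Rightarrow> real) \<Rightarrow> bool" where
  "Ck 0 f = continuous_on UNIV f"
| "Ck (Suc k) f = (continuous_on UNIV f \<and>
     (\<forall>b\<in>Basis. \<exists>g. (\<forall>x. ((\<lambda>t. f (x + t *\<^sub>R b)) has_real_derivative g x) (at 0)) \<and> Ck k g))"

definition smooth_fun :: "('a::euclidean_space \<Rightarrow> real) \<Rightarrow> bool" where
  "smooth_fun f = (\<forall>k. Ck k f)"

definition idx :: "nat \<Rightarrow> 'n::{finite,linorder}" where
  "idx i = sorted_list_of_set (UNIV :: 'n set) ! i"

text \<open>Sorting permutation of the index type: p is the permutation such that
  a < b implies alpha_(p a) < alpha_(p b); the paper's pi_alpha(i+1) is p (idx i).\<close>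
definition sortperm :: "(((real,3) vec,'n::{finite,linorder}) vec \<Rightarrow> (real,'n) vec) \<Rightarrow> ((real,3) vec,'n) vec \<Rightarrow> ('n \<Rightarrow> 'n)" where
  "sortperm \<alpha> r = (THE p. p permutes UNIV \<and>
      (\<forall>a b. a < b \<longrightarrow> \<alpha> r $ p a < \<alpha> r $ p b))"

definition sortlet :: "(((real,3) vec,'n::{finite,linorder}) vec \<Rightarrow> (real,'n) vec) \<Rightarrow> ((real,3) vec,'n) vec \<Rightarrow> real" where
  "sortlet \<alpha> r =
     (if inj (\<lambda>i. \<alpha> r $ i)
      then (let p = sortperm \<alpha> r in
            of_int (sign p) *
            (\<Prod>i<CARD('n) - 1. \<alpha> r $ p (idx (Suc i)) - \<alpha> r $ p (idx i)))
      else 0)"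

end

theory Submission
  imports Defs
begin

lemma idx_len: "length (sorted_list_of_set (UNIV::'n::{finite,linorder} set)) = CARD('n)"
  by (simp add: length_sorted_list_of_set)

lemma idx_less:
  assumes "i < j" "j < CARD('n::{finite,linorder})"
  shows "(idx i :: 'n) < idx j"
  unfolding idx_def
  by (rule sorted_wrt_nth_less[OF strict_sorted_list_of_set[of "UNIV::'n set"]]) (use assms idx_len[where 'n='n] in auto)

lemma idx_le_iff:
  assumes "i < CARD('n::{finite,linorder})" "j < CARD('n)"
  shows "((idx i :: 'n) \<le> idx j) = (i \<le> j)"
  using idx_less[of i j, where 'n='n] idx_less[of j i, where 'n='n] assms
  by (metis le_less linorder_not_less order_less_asym)

lemma idx_inj:
  assumes "i < CARD('n::{finite,linorder})" "j < CARD('n)" "(idx i :: 'n) = idx j"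
  shows "i = j"
  using idx_le_iff[OF assms(1,2)] idx_le_iff[OF assms(2,1)] assms(3) by simp

lemma idx_surj: "\<exists>i < CARD('n::{finite,linorder}). idx i = (x::'n)"
proof -
  have "x \<in> set (sorted_list_of_set (UNIV::'n set))" by simp
  then show ?thesis unfolding idx_def by (metis in_set_conv_nth idx_len)
qed

definition sW :: "(real,'n::{finite,linorder}) vec \<Rightarrow> ('n \<Rightarrow> 'n) set" where
  "sW a = {s. s permutes UNIV \<and> (\<forall>x y. x \<le> y \<longrightarrow> a $ s x \<le> a $ s y)}"

definition sP :: "('n::{finite,linorder} \<Rightarrow> 'n) \<Rightarrow> (real,'n) vec \<Rightarrow> real" where
  "sP s a = of_int (sign s) * (\<Prod>i<CARD('n) - 1. a $ s (idx (Suc i)) - a $ s (idx i))"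

definition sDP :: "('n::{finite,linorder} \<Rightarrow> 'n) \<Rightarrow> (real,'n) vec \<Rightarrow> (real,'n) vec \<Rightarrow> real" where
  "sDP s a v = of_int (sign s) * (\<Sum>k<CARD('n) - 1. (v $ s (idx (Suc k)) - v $ s (idx k)) *
      (\<Prod>j\<in>{..<CARD('n) - 1} - {k}. a $ s (idx (Suc j)) - a $ s (idx j)))"

lemma sW_nonempty: "\<exists>s. s \<in> sW (a::(real,'n::{finite,linorder}) vec)"
proof -
  define xs where "xs = sorted_list_of_set (UNIV::'n set)"
  define ys where "ys = sort_key (\<lambda>y. a $ y) xs"
  have lx: "length xs = CARD('n)" using idx_len xs_def by simp
  have ly: "length ys = CARD('n)" using lx ys_def by simp
  have dx: "distinct xs" by (simp add: xs_def)
  have dy: "distinct ys" using dx ys_def by simp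
  have sx: "set xs = UNIV" by (simp add: xs_def)
  have sy: "set ys = UNIV" using sx ys_def by simp
  have bx: "bij_betw ((!) xs) {..<CARD('n)} UNIV"
    using bij_betw_nth[OF dx, of "{..<CARD('n)}" UNIV] lx sx by (simp add: lessThan_atLeast0)
  have by': "bij_betw ((!) ys) {..<CARD('n)} UNIV"
    using bij_betw_nth[OF dy, of "{..<CARD('n)}" UNIV] ly sy by (simp add: lessThan_atLeast0)
  define s where "s = (!) ys \<circ> inv_into {..<CARD('n)} ((!) xs)"
  have bs: "bij s" unfolding s_def
    using bij_betw_trans[OF bij_betw_inv_into[OF bx] by'] by simp
  have "s permutes UNIV" using bij_imp_permutes[of s UNIV] bs by auto
  moreover have "a $ s x \<le> a $ s y" if "x \<le> y" for x y
  proof -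
    obtain i where i: "i < CARD('n)" "xs ! i = x" using bx by (metis bij_betw_iff_bijections lessThan_iff UNIV_I)
    obtain j where j: "j < CARD('n)" "xs ! j = y" using bx by (metis bij_betw_iff_bijections lessThan_iff UNIV_I)
    have "s x = ys ! i" unfolding s_def using bij_betw_inv_into_left[OF bx, of i] i by auto
    moreover have "s y = ys ! j" unfolding s_def using bij_betw_inv_into_left[OF bx, of j] j by auto
    moreover have "i \<le> j"
      using idx_le_iff[OF i(1) j(1)] i j that unfolding idx_def xs_def by simp
    moreover have "sorted (map (\<lambda>y. a $ y) ys)" by (simp add: ys_def)
    ultimately show ?thesis using j ly
      by (metis length_map nth_map order_le_less_trans sorted_nth_mono i(1))
  qed
  ultimately show ?thesis unfolding sW_def by blast
qed


lemma sW_same: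
  assumes "s \<in> sW a" "t \<in> sW (a::(real,'n::{finite,linorder}) vec)" "k < CARD('n)"
  shows "a $ s (idx k) = a $ t (idx k)"
proof -
  define xs where "xs = sorted_list_of_set (UNIV::'n set)"
  have lx: "length xs = CARD('n)" using idx_len xs_def by simp
  have dx: "distinct xs" by (simp add: xs_def)
  have sx: "set xs = UNIV" by (simp add: xs_def)
  have mx: "mset xs = mset_set UNIV" using mset_set_set[OF dx] sx by simp
  have L: "sorted (map (\<lambda>y. a $ p y) xs) \<and> mset (map (\<lambda>y. a $ p y) xs) = image_mset (\<lambda>y. a $ y) (mset_set UNIV)"
    if p: "p \<in> sW a" for p
  proof
    have mono: "a $ p x \<le> a $ p y" if "x \<le> y" for x y using p that unfolding sW_def by blast
    have "xs ! i \<le> xs ! j" if "i \<le> j" "j < length xs" for i j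
      using idx_le_iff[of i j, where 'n='n] that lx unfolding idx_def xs_def by simp
    then show "sorted (map (\<lambda>y. a $ p y) xs)"
      unfolding sorted_iff_nth_mono by (simp add: mono)
    have inj: "inj p" using p unfolding sW_def using permutes_inj by blast
    have sur: "range p = UNIV" using p unfolding sW_def by (simp add: permutes_image)
    have "mset (map (\<lambda>y. a $ p y) xs) = image_mset (\<lambda>y. a $ y) (image_mset p (mset xs))"
      by (simp add: multiset.map_comp o_def)
    also have "image_mset p (mset xs) = mset_set UNIV"
      using mx image_mset_mset_set[of p UNIV] inj sur by simp
    finally show "mset (map (\<lambda>y. a $ p y) xs) = image_mset (\<lambda>y. a $ y) (mset_set UNIV)" .
  qed
  have "map (\<lambda>y. a $ s y) xs = map (\<lambda>y. a $ t y) xs"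
    using L[OF assms(1)] L[OF assms(2)] properties_for_sort by metis
  then have "map (\<lambda>y. a $ s y) xs ! k = map (\<lambda>y. a $ t y) xs ! k" by (rule arg_cong)
  then show ?thesis using assms(3) lx unfolding idx_def xs_def by simp
qed

lemma sW_strict:
  assumes "s \<in> sW a" "inj (\<lambda>i. (a::(real,'n::{finite,linorder}) vec) $ i)" "x < y"
  shows "a $ s x < a $ s y"
proof -
  have "a $ s x \<le> a $ s y" using assms unfolding sW_def by auto
  moreover have "inj s" using assms(1) unfolding sW_def using permutes_inj by blast
  then have "s x \<noteq> s y" using assms(3) unfolding inj_def by auto
  then have "a $ s x \<noteq> a $ s y" using assms(2) unfolding inj_def by blast
  ultimately show ?thesis by simp
qed

lemma sortperm_eq:
  fixes \<alpha> :: "((real,3) vec,'n::{finite,linorder}) vec \<Rightarrow> (real,'n) vec"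
  assumes "s \<in> sW (\<alpha> r)" "inj (\<lambda>i. \<alpha> r $ i)"
  shows "sortperm \<alpha> r = s"
  unfolding sortperm_def
proof (rule the_equality)
  show "s permutes UNIV \<and> (\<forall>a b. a < b \<longrightarrow> \<alpha> r $ s a < \<alpha> r $ s b)"
    using assms sW_strict[OF assms] unfolding sW_def by blast
next
  fix p assume p: "p permutes UNIV \<and> (\<forall>a b. a < b \<longrightarrow> \<alpha> r $ p a < \<alpha> r $ p b)"
  have "\<alpha> r $ p x \<le> \<alpha> r $ p y" if "x \<le> y" for x y
  proof (cases "x = y")
    case False
    then have "x < y" using that by simp
    then show ?thesis using p by (simp add: less_imp_le)
  qed simp
  then have pW: "p \<in> sW (\<alpha> r)" unfolding sW_def using p by blast
  have "p x = s x" for x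
  proof -
    obtain k where "k < CARD('n)" "idx k = x" using idx_surj by blast
    then have "\<alpha> r $ p x = \<alpha> r $ s x" using sW_same[OF pW assms(1)] by blast
    then show ?thesis using assms(2) unfolding inj_def by blast
  qed
  then show "p = s" by auto
qed

lemma sW_zero:
  assumes "s \<in> sW (a::(real,'n::{finite,linorder}) vec)" "\<not> inj (\<lambda>i. a $ i)"
  shows "\<exists>k < CARD('n) - 1. a $ s (idx (Suc k)) = a $ s (idx k)"
proof -
  obtain x y where xy: "x \<noteq> y" "a $ x = a $ y" using assms(2) unfolding inj_def by blast
  have sp: "s permutes UNIV" using assms(1) unfolding sW_def by blast
  obtain x' y' where "s x' = x" "s y' = y" using sp by (metis permutes_univ)
  then have "x' \<noteq> y'" "a $ s x' = a $ s y'" using xy by auto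
  then obtain u v where uv: "u < v" "a $ s u = a $ s v"
    by (metis linorder_neqE)
  obtain m where m: "m < CARD('n)" "idx m = u" using idx_surj by blast
  obtain n where n: "n < CARD('n)" "idx n = v" using idx_surj by blast
  have mn: "m < n" using idx_le_iff[OF n(1) m(1)] m n uv by (metis not_le order_less_imp_le)
  have mono: "a $ s p \<le> a $ s q" if "p \<le> q" for p q using assms(1) that unfolding sW_def by blast
  have "a $ s (idx m) \<le> a $ s (idx (Suc m))" using mono idx_le_iff[of m "Suc m", where 'n='n] mn n by auto
  moreover have "a $ s (idx (Suc m)) \<le> a $ s (idx n)" using mono idx_le_iff[of "Suc m" n, where 'n='n] mn n by auto
  ultimately have "a $ s (idx (Suc m)) = a $ s (idx m)" using uv m n by auto
  then show ?thesis using mn n by (intro exI[of _ m]) auto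
qed

lemma sortlet_eq:
  fixes \<alpha> :: "((real,3) vec,'n::{finite,linorder}) vec \<Rightarrow> (real,'n) vec"
  assumes "s \<in> sW (\<alpha> r)"
  shows "sortlet \<alpha> r = sP s (\<alpha> r)"
proof (cases "inj (\<lambda>i. \<alpha> r $ i)")
  case True
  then show ?thesis unfolding sortlet_def sP_def using sortperm_eq[of s \<alpha> r] assms True by simp
next
  case False
  obtain k where "k < CARD('n) - 1" "\<alpha> r $ s (idx (Suc k)) = \<alpha> r $ s (idx k)"
    using sW_zero[OF assms False] by blast
  then have "(\<Prod>i<CARD('n) - 1. \<alpha> r $ s (idx (Suc i)) - \<alpha> r $ s (idx i)) = 0"
    by (intro prod_zero) auto
  then show ?thesis unfolding sortlet_def sP_def using False by simp
qed


lemma sW_mono: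
  assumes "s \<in> sW (a::(real,'n::{finite,linorder}) vec)" "i \<le> j" "j < CARD('n)"
  shows "a $ s (idx i) \<le> a $ s (idx j)"
proof -
  have "(idx i :: 'n) \<le> idx j" using idx_le_iff[of i j, where 'n='n] assms by simp
  then show ?thesis using assms(1) unfolding sW_def by blast
qed

lemma sW_gapzero:
  assumes "s \<in> sW (a::(real,'n::{finite,linorder}) vec)" "m < k" "k < CARD('n)"
    "a $ s (idx m) = a $ s (idx k)" "m \<le> j" "j < k"
  shows "a $ s (idx (Suc j)) = a $ s (idx j)"
proof -
  have "a $ s (idx m) \<le> a $ s (idx j)" using sW_mono[OF assms(1), of m j] assms by simp
  moreover have "a $ s (idx j) \<le> a $ s (idx (Suc j))" using sW_mono[OF assms(1), of j "Suc j"] assms by simp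
  moreover have "a $ s (idx (Suc j)) \<le> a $ s (idx k)" using sW_mono[OF assms(1), of "Suc j" k] assms by simp
  ultimately show ?thesis using assms(4) by simp
qed

lemma sW_uniqpos:
  assumes "s \<in> sW (a::(real,'n::{finite,linorder}) vec)" "t \<in> sW a" "k < CARD('n)"
    "\<forall>m<CARD('n). m \<noteq> k \<longrightarrow> a $ s (idx m) \<noteq> a $ s (idx k)"
  shows "t (idx k) = s (idx k)"
proof -
  have sp: "s permutes UNIV" using assms(1) unfolding sW_def by blast
  obtain y where y: "s y = t (idx k)" using sp by (metis permutes_univ)
  obtain m where m: "m < CARD('n)" "idx m = y" using idx_surj by blast
  have "a $ s (idx m) = a $ t (idx k)" using y m by simp
  also have "\<dots> = a $ s (idx k)" using sW_same[OF assms(1,2,3)] by simp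
  finally have "m = k" using assms(4) m by blast
  then show ?thesis using y m by simp
qed

lemma sW_eqI:
  assumes "\<forall>k<CARD('n::{finite,linorder}). (t::'n\<Rightarrow>'n) (idx k) = s (idx k)"
  shows "t = s"
proof
  fix x :: 'n
  obtain k where "k < CARD('n)" "idx k = x" using idx_surj by blast
  then show "t x = s x" using assms by blast
qed

lemma sDP_same:
  assumes s: "s \<in> sW (a::(real,'n::{finite,linorder}) vec)" and t: "t \<in> sW a"
  shows "sDP s a v = sDP t a v"
proof -
  define N where "N = CARD('n)"
  define M where "M = N - 1"
  define gap where "gap j = a $ s (idx (Suc j)) - a $ s (idx j)" for j
  define C where "C k = (\<Prod>j\<in>{..<M} - {k}. gap j)" for k
  have Mlt: "j < M \<Longrightarrow> Suc j < N" for j unfolding M_def by simp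
  have gapt: "a $ t (idx (Suc j)) - a $ t (idx j) = gap j" if "j < M" for j
    using sW_same[OF s t, of j] sW_same[OF s t, of "Suc j"] Mlt[OF that] unfolding gap_def N_def by simp
  have Ct: "(\<Prod>j\<in>{..<M} - {k}. a $ t (idx (Suc j)) - a $ t (idx j)) = C k" for k
    unfolding C_def by (rule prod.cong) (auto simp: gapt)
  have DPs: "sDP s a v = of_int (sign s) * (\<Sum>k<M. (v $ s (idx (Suc k)) - v $ s (idx k)) * C k)"
    unfolding sDP_def C_def gap_def M_def N_def by simp
  have DPt: "sDP t a v = of_int (sign t) * (\<Sum>k<M. (v $ t (idx (Suc k)) - v $ t (idx k)) * C k)"
    unfolding sDP_def M_def N_def using Ct[unfolded M_def N_def] by simp
  have sp: "s permutes UNIV" using s unfolding sW_def by blast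
  have tp: "t permutes UNIV" using t unfolding sW_def by blast
  have tinj: "inj t" using tp permutes_inj by blast
  have gap0: "gap j = 0" if "m < k" "k < N" "a $ s (idx m) = a $ s (idx k)" "m \<le> j" "j < k" for m k j
    using sW_gapzero[OF s, of m k j] that unfolding gap_def N_def by simp
  consider (none) "\<forall>j<M. gap j \<noteq> 0"
    | (two) k1 k2 where "k1 < M" "k2 < M" "k1 \<noteq> k2" "gap k1 = 0" "gap k2 = 0"
    | (one) k0 where "k0 < M" "gap k0 = 0" "\<forall>j<M. j \<noteq> k0 \<longrightarrow> gap j \<noteq> 0"
  proof (cases "\<forall>j<M. gap j \<noteq> 0")
    case True
    then show ?thesis using that(1) by blast
  next
    case False
    then obtain k0 where k0: "k0 < M" "gap k0 = 0" by blast
    show ?thesis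
    proof (cases "\<exists>k2<M. k2 \<noteq> k0 \<and> gap k2 = 0")
      case True
      then obtain k2 where "k2 < M" "k2 \<noteq> k0" "gap k2 = 0" by blast
      then show ?thesis using that(2)[of k0 k2] k0 by simp
    next
      case False
      then show ?thesis using that(3)[of k0] k0 by blast
    qed
  qed
  then show ?thesis
  proof cases
    case none
    have "t (idx k) = s (idx k)" if "k < N" for k
    proof (rule sW_uniqpos[OF s t])
      show "k < CARD('n)" using that N_def by simp
      show "\<forall>m<CARD('n). m \<noteq> k \<longrightarrow> a $ s (idx m) \<noteq> a $ s (idx k)"
      proof (intro allI impI notI)
        fix m assume m: "m < CARD('n)" "m \<noteq> k" "a $ s (idx m) = a $ s (idx k)"
        show False
        proof (cases "m < k")
          case True
          then have "gap m = 0" using gap0[of m k m] m that by simp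
          moreover have "m < M" using True that M_def by simp
          ultimately show False using none by blast
        next
          case False
          then have "k < m" using m by simp
          then have "gap k = 0" using gap0[of k m k] m that N_def by simp
          moreover have "k < M" using \<open>k < m\<close> m M_def N_def by simp
          ultimately show False using none by blast
        qed
      qed
    qed
    then have "t = s" using sW_eqI N_def by blast
    then show ?thesis by simp
  next
    case two
    have "C k = 0" if "k < M" for k
    proof (cases "k = k1")
      case True
      then show ?thesis unfolding C_def using two by (intro prod_zero) (auto intro!: bexI[of _ k2])
    next
      case False
      then show ?thesis unfolding C_def using two by (intro prod_zero) (auto intro!: bexI[of _ k1])
    qed
    then show ?thesis unfolding DPs DPt by simp
  next
    case one
    have Ck: "C k = 0" if "k < M" "k \<noteq> k0" for k
      unfolding C_def using one that by (intro prod_zero) (auto intro!: bexI[of _ k0])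
    have sum_red: "(\<Sum>k<M. f k * C k) = f k0 * C k0" for f :: "nat \<Rightarrow> real"
    proof -
      have "(\<Sum>k<M. f k * C k) = f k0 * C k0 + (\<Sum>k\<in>{..<M} - {k0}. f k * C k)"
        using one(1) by (intro sum.remove) auto
      also have "(\<Sum>k\<in>{..<M} - {k0}. f k * C k) = 0" by (rule sum.neutral) (auto simp: Ck)
      finally show ?thesis by simp
    qed
    define p where "p = (idx k0 :: 'n)"
    define q where "q = (idx (Suc k0) :: 'n)"
    have k0N: "k0 < N" "Suc k0 < N" using one(1) M_def by auto
    have pq: "p \<noteq> q" unfolding p_def q_def using idx_inj[of k0 "Suc k0", where 'n='n] k0N N_def by auto
    have outside: "t (idx k) = s (idx k)" if "k < N" "k \<noteq> k0" "k \<noteq> Suc k0" for k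
    proof (rule sW_uniqpos[OF s t])
      show "k < CARD('n)" using that N_def by simp
      show "\<forall>m<CARD('n). m \<noteq> k \<longrightarrow> a $ s (idx m) \<noteq> a $ s (idx k)"
      proof (intro allI impI notI)
        fix m assume m: "m < CARD('n)" "m \<noteq> k" "a $ s (idx m) = a $ s (idx k)"
        show False
        proof (cases "m < k")
          case True
          then have "gap m = 0" "gap (k - 1) = 0" using gap0[of m k m] gap0[of m k "k - 1"] m that by auto
          moreover have "m < M" "k - 1 < M" using True that M_def by auto
          ultimately have "m = k0" "k - 1 = k0" using one(3) by blast+
          then show False using that True by simp
        next
          case False
          then have km: "k < m" using m by simp
          then have "gap k = 0" "gap (m - 1) = 0" using gap0[of k m k] gap0[of k m "m - 1"] m that N_def by auto
          moreover have "k < M" "m - 1 < M" using km m M_def N_def by auto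
          ultimately have "k = k0" "m - 1 = k0" using one(3) by blast+
          then show False using that km by simp
        qed
      qed
    qed
    have inpq: "t u = s p \<or> t u = s q" if "u = p \<or> u = q" for u
    proof -
      obtain y where y: "s y = t u" using sp by (metis permutes_univ)
      obtain m where m: "m < N" "idx m = y" using idx_surj N_def by blast
      show ?thesis
      proof (cases "m = k0 \<or> m = Suc k0")
        case True
        then show ?thesis using y m p_def q_def by auto
      next
        case False
        then have "t (idx m) = s (idx m)" using outside m by blast
        then have "t u = t (idx m)" using y m by simp
        then have "u = idx m" using tinj unfolding inj_def by blast
        then have "idx m = (idx k0 :: 'n) \<or> idx m = (idx (Suc k0) :: 'n)" using that p_def q_def by simp
        then have "m = k0 \<or> m = Suc k0" using idx_inj[of m k0, where 'n='n] idx_inj[of m "Suc k0", where 'n='n] m k0N N_def by auto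
        then show ?thesis using False by simp
      qed
    qed
    have tpq: "t p \<noteq> t q" using pq tinj unfolding inj_def by blast
    have "of_int (sign t) * (v $ t q - v $ t p) = of_int (sign s) * (v $ s q - v $ s p)"
    proof (cases "t p = s p")
      case True
      then have "t q = s q" using inpq[of q] tpq by auto
      have "t = s"
      proof (rule sW_eqI, intro allI impI)
        fix k assume "k < CARD('n)"
        then show "t (idx k) = s (idx k)"
          using outside[of k] True \<open>t q = s q\<close> p_def q_def N_def by (cases "k = k0 \<or> k = Suc k0") auto
      qed
      then show ?thesis by simp
    next
      case False
      have tp': "t p = s q" using inpq[of p] False by blast
      have tq': "t q = s p"
      proof -
        have "t q = s p \<or> t q = s q" using inpq[of q] by blast
        then show ?thesis using tp' tpq by auto
      qed
      have teq: "t = s \<circ> Transposition.transpose p q"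
      proof (rule sW_eqI, intro allI impI)
        fix k assume k: "k < CARD('n)"
        show "t (idx k) = (s \<circ> Transposition.transpose p q) (idx k)"
        proof (cases "k = k0 \<or> k = Suc k0")
          case True
          then show ?thesis
          proof
            assume "k = k0"
            then have "idx k = p" using p_def by simp
            then show ?thesis using tp' by simp
          next
            assume "k = Suc k0"
            then have "idx k = q" using q_def by simp
            then show ?thesis using tq' by simp
          qed
        next
          case False
          then have "idx k \<noteq> p" "idx k \<noteq> q"
            using idx_inj[of k k0, where 'n='n] idx_inj[of k "Suc k0", where 'n='n] k k0N N_def p_def q_def by auto
          moreover have "t (idx k) = s (idx k)" using outside[of k] False k N_def by blast
          ultimately show ?thesis by simp
        qed
      qed
      have ps: "permutation s" unfolding permutation_permutes using sp by (intro exI[of _ UNIV]) simp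
      have pt: "permutation (Transposition.transpose p q)" by (rule permutation_swap_id)
      have "sign t = sign s * sign (Transposition.transpose p q)"
        unfolding teq by (rule sign_compose[OF ps pt])
      also have "sign (Transposition.transpose p q) = (if p = q then 1 else -1)" by (rule sign_swap_id)
      also have "\<dots> = -1" using pq by simp
      finally have st: "sign t = - sign s" by simp
      have "of_int (sign t) * (v $ t q - v $ t p) = - of_int (sign s) * (v $ s p - v $ s q)"
        using st tp' tq' by simp
      also have "\<dots> = of_int (sign s) * (v $ s q - v $ s p)" by (simp add: algebra_simps)
      finally show ?thesis .
    qed
    then have K: "of_int (sign t) * (v $ t (idx (Suc k0)) - v $ t (idx k0))
        = of_int (sign s) * (v $ s (idx (Suc k0)) - v $ s (idx k0))" unfolding p_def q_def .
    have "sDP s a v = of_int (sign s) * (v $ s (idx (Suc k0)) - v $ s (idx k0)) * C k0"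
      unfolding DPs sum_red by (simp only: mult.assoc)
    moreover have "sDP t a v = of_int (sign t) * (v $ t (idx (Suc k0)) - v $ t (idx k0)) * C k0"
      unfolding DPt sum_red by (simp only: mult.assoc)
    ultimately show ?thesis using K by simp
  qed
qed


lemma glue_tendsto:
  assumes "finite S" "\<forall>s\<in>S. (h s \<longlongrightarrow> L) F" "eventually (\<lambda>x. \<exists>s\<in>S. f x = h s x) F"
  shows "(f \<longlongrightarrow> L) F"
proof (rule topological_tendstoI)
  fix U assume U: "open U" "L \<in> U"
  have "\<forall>s\<in>S. eventually (\<lambda>x. h s x \<in> U) F"
  proof
    fix s assume "s \<in> S"
    then have "(h s \<longlongrightarrow> L) F" using assms(2) by blast
    then show "eventually (\<lambda>x. h s x \<in> U) F" using U by (rule topological_tendstoD)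
  qed
  then have "eventually (\<lambda>x. \<forall>s\<in>S. h s x \<in> U) F" by (rule eventually_ball_finite[OF assms(1)])
  then show "eventually (\<lambda>x. f x \<in> U) F" using assms(3) by eventually_elim auto
qed

lemma finite_sW: "finite (sW (a::(real,'n::{finite,linorder}) vec))"
  by (rule finite_subset[of _ UNIV]) simp_all

lemma sW_near:
  fixes a0 :: "(real,'n::{finite,linorder}) vec"
  assumes "\<forall>i. ((\<lambda>y. f y $ i) \<longlongrightarrow> a0 $ i) F"
  shows "eventually (\<lambda>y. sW (f y) \<subseteq> sW a0) F"
proof -
  define D where "D = (\<lambda>(i,j). \<bar>a0 $ i - a0 $ j\<bar>) ` {(i,j). a0 $ i \<noteq> a0 $ j}"
  have fD: "finite D" unfolding D_def by simp
  define d where "d = (if D = {} then 1 else Min D)"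
  have Dpos: "\<forall>x\<in>D. x > 0" unfolding D_def by auto
  have dpos: "d > 0" unfolding d_def using fD Dpos by auto
  have dle: "d \<le> \<bar>a0 $ i - a0 $ j\<bar>" if "a0 $ i \<noteq> a0 $ j" for i j
  proof -
    have "\<bar>a0 $ i - a0 $ j\<bar> \<in> D" unfolding D_def using that by force
    then show ?thesis unfolding d_def using fD by auto
  qed
  have "\<forall>i. eventually (\<lambda>y. \<bar>f y $ i - a0 $ i\<bar> < d / 2) F"
  proof
    fix i
    have "eventually (\<lambda>y. dist (f y $ i) (a0 $ i) < d / 2) F"
      using assms dpos by (intro tendstoD) simp_all
    then show "eventually (\<lambda>y. \<bar>f y $ i - a0 $ i\<bar> < d / 2) F" by (simp add: dist_real_def)
  qed
  then have "eventually (\<lambda>y. \<forall>i. \<bar>f y $ i - a0 $ i\<bar> < d / 2) F"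
    by (simp add: eventually_all_finite)
  then show ?thesis
  proof eventually_elim
    case (elim y)
    show ?case
    proof
      fix s assume s: "s \<in> sW (f y)"
      have "a0 $ s u \<le> a0 $ s v" if "u \<le> v" for u v
      proof (rule ccontr)
        assume "\<not> a0 $ s u \<le> a0 $ s v"
        then have "a0 $ s u \<noteq> a0 $ s v" "a0 $ s u > a0 $ s v" by auto
        then have "d \<le> a0 $ s u - a0 $ s v" using dle[of "s u" "s v"] by simp
        moreover have "f y $ s u \<le> f y $ s v" using s that unfolding sW_def by blast
        moreover have "\<bar>f y $ s u - a0 $ s u\<bar> < d / 2" "\<bar>f y $ s v - a0 $ s v\<bar> < d / 2" using elim by blast+
        ultimately show False by linarith
      qed
      then show "s \<in> sW a0" using s unfolding sW_def by blast
    qed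
  qed
qed

lemma DERIV_prod_real:
  assumes "\<And>j. j \<in> I \<Longrightarrow> (f j has_real_derivative f' j) (at x)"
  shows "((\<lambda>t. \<Prod>j\<in>I. f j t) has_real_derivative (\<Sum>j\<in>I. f' j * (\<Prod>k\<in>I - {j}. f k x))) (at x)"
proof -
  have der: "((\<lambda>t. \<Prod>j\<in>I. f j t) has_derivative (\<lambda>y. \<Sum>j\<in>I. (\<lambda>y. f' j * y) y * (\<Prod>k\<in>I - {j}. f k x))) (at x)"
    by (rule has_derivative_prod) (use assms in \<open>auto simp: has_field_derivative_def\<close>)
  have eq: "(\<lambda>y. \<Sum>j\<in>I. (\<lambda>y. f' j * y) y * (\<Prod>k\<in>I - {j}. f k x)) = (*) (\<Sum>j\<in>I. f' j * (\<Prod>k\<in>I - {j}. f k x))"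
    by (rule ext) (simp add: sum_distrib_left sum_distrib_right mult_ac)
  show ?thesis unfolding has_field_derivative_def using der unfolding eq .
qed

lemma sP_deriv:
  fixes c :: "real \<Rightarrow> (real,'n::{finite,linorder}) vec"
  assumes "\<forall>i. ((\<lambda>t. c t $ i) has_real_derivative c' $ i) (at t0)"
  shows "((\<lambda>t. sP s (c t)) has_real_derivative sDP s (c t0) c') (at t0)"
proof -
  have "((\<lambda>t. \<Prod>j<CARD('n) - 1. c t $ s (idx (Suc j)) - c t $ s (idx j)) has_real_derivative
      (\<Sum>k<CARD('n) - 1. (c' $ s (idx (Suc k)) - c' $ s (idx k)) *
        (\<Prod>j\<in>{..<CARD('n) - 1} - {k}. c t0 $ s (idx (Suc j)) - c t0 $ s (idx j)))) (at t0)"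
    by (rule DERIV_prod_real) (intro DERIV_diff assms[rule_format])
  then show ?thesis unfolding sP_def sDP_def by (rule DERIV_cmult)
qed


theorem mainTheorem2:
  fixes \<alpha> :: "((real,3) vec,'n::{finite,linorder}) vec \<Rightarrow> (real,'n) vec"
  assumes "CARD('n) \<ge> 2"
    and "\<forall>i. smooth_fun (\<lambda>r. \<alpha> r $ i)"
  shows "Ck 1 (sortlet \<alpha>)"
proof -
  have C1: "Ck (Suc 0) (\<lambda>r. \<alpha> r $ i)" for i using assms(2) unfolding smooth_fun_def by blast
  have cont: "continuous_on UNIV (\<lambda>r. \<alpha> r $ i)" for i using C1[of i] by simp
  have isC: "isCont (\<lambda>r. \<alpha> r $ i) x" for i x
    using continuous_on_eq_continuous_at[OF open_UNIV, of "\<lambda>r. \<alpha> r $ i"] cont[of i] by simp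
  have ex: "\<forall>i. \<forall>b\<in>Basis. \<exists>g. (\<forall>x. ((\<lambda>t. \<alpha> (x + t *\<^sub>R b) $ i) has_real_derivative g x) (at 0)) \<and> continuous_on UNIV g"
    using C1 by simp
  obtain G where G: "\<And>i b. b \<in> Basis \<Longrightarrow> (\<forall>x. ((\<lambda>t. \<alpha> (x + t *\<^sub>R b) $ i) has_real_derivative G i b x) (at 0)) \<and> continuous_on UNIV (G i b)"
  proof -
    have "\<exists>G. \<forall>i b. b \<in> Basis \<longrightarrow> (\<forall>x. ((\<lambda>t. \<alpha> (x + t *\<^sub>R b) $ i) has_real_derivative G i b x) (at 0)) \<and> continuous_on UNIV (G i b)"
    proof -
      have "\<forall>i. \<exists>Gi. \<forall>b. b \<in> Basis \<longrightarrow> (\<forall>x. ((\<lambda>t. \<alpha> (x + t *\<^sub>R b) $ i) has_real_derivative Gi b x) (at 0)) \<and> continuous_on UNIV (Gi b)"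
      proof
        fix i
        show "\<exists>Gi. \<forall>b. b \<in> Basis \<longrightarrow> (\<forall>x. ((\<lambda>t. \<alpha> (x + t *\<^sub>R b) $ i) has_real_derivative Gi b x) (at 0)) \<and> continuous_on UNIV (Gi b)"
          by (rule choice) (use ex in blast)
      qed
      then show ?thesis by (rule choice)
    qed
    then show ?thesis using that by blast
  qed
  have isCG: "isCont (G i b) x" if "b \<in> Basis" for i b x
    using continuous_on_eq_continuous_at[OF open_UNIV, of "G i b"] G[OF that] by simp
  have tend: "\<forall>i. ((\<lambda>r. \<alpha> r $ i) \<longlongrightarrow> \<alpha> x0 $ i) (at x0)" for x0
    using isC unfolding isCont_def by blast

  have contS: "isCont (sortlet \<alpha>) x0" for x0
    unfolding isCont_def
  proof (rule glue_tendsto[where S="sW (\<alpha> x0)" and h="\<lambda>s r. sP s (\<alpha> r)"])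
    show "finite (sW (\<alpha> x0))" by (rule finite_sW)
    show "\<forall>s\<in>sW (\<alpha> x0). ((\<lambda>r. sP s (\<alpha> r)) \<longlongrightarrow> sortlet \<alpha> x0) (at x0)"
    proof
      fix s assume s: "s \<in> sW (\<alpha> x0)"
      have "isCont (\<lambda>r. sP s (\<alpha> r)) x0" unfolding sP_def by (intro continuous_intros isC)
      moreover have "sP s (\<alpha> x0) = sortlet \<alpha> x0" using sortlet_eq[of s \<alpha> x0] s by simp
      ultimately show "((\<lambda>r. sP s (\<alpha> r)) \<longlongrightarrow> sortlet \<alpha> x0) (at x0)"
        unfolding isCont_def by simp
    qed
    show "\<forall>\<^sub>F r in at x0. \<exists>s\<in>sW (\<alpha> x0). sortlet \<alpha> r = sP s (\<alpha> r)"
      using sW_near[OF tend[of x0]]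
    proof eventually_elim
      case (elim r)
      obtain s where "s \<in> sW (\<alpha> r)" using sW_nonempty by blast
      then show ?case using elim sortlet_eq[of s \<alpha> r] by blast
    qed
  qed

  have deriv: "\<exists>g. (\<forall>x. ((\<lambda>t. sortlet \<alpha> (x + t *\<^sub>R b)) has_real_derivative g x) (at 0)) \<and> continuous_on UNIV g"
    if b: "b \<in> Basis" for b
  proof -
    define Gv where "Gv x = (\<chi> i. G i b x)" for x
    define D where "D x = sDP (SOME s. s \<in> sW (\<alpha> x)) (\<alpha> x) (Gv x)" for x
    have Deq: "D x = sDP s (\<alpha> x) (Gv x)" if "s \<in> sW (\<alpha> x)" for s x
    proof -
      have "(SOME s. s \<in> sW (\<alpha> x)) \<in> sW (\<alpha> x)" using that by (rule someI[of "\<lambda>s. s \<in> sW (\<alpha> x)"])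
      then show ?thesis unfolding D_def using sDP_same[OF _ that] by blast
    qed
    have hasD: "((\<lambda>t. sortlet \<alpha> (x + t *\<^sub>R b)) has_real_derivative D x) (at 0)" for x
    proof -
      define c where "c t = \<alpha> (x + t *\<^sub>R b)" for t
      have c0: "c 0 = \<alpha> x" unfolding c_def by simp
      have cd: "\<forall>i. ((\<lambda>t. c t $ i) has_real_derivative Gv x $ i) (at 0)"
        unfolding c_def Gv_def using G[OF b] by simp
      have ctend: "\<forall>i. ((\<lambda>t. c t $ i) \<longlongrightarrow> c 0 $ i) (at 0)"
      proof
        fix i
        show "((\<lambda>t. c t $ i) \<longlongrightarrow> c 0 $ i) (at 0)"
          using DERIV_isCont[OF cd[rule_format, of i]] unfolding isCont_def .
      qed
      show ?thesis unfolding has_field_derivative_iff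
      proof (rule glue_tendsto[where S="sW (c 0)" and h="\<lambda>s t. (sP s (c t) - sP s (c 0)) / (t - 0)"])
        show "finite (sW (c 0))" by (rule finite_sW)
        show "\<forall>s\<in>sW (c 0). ((\<lambda>t. (sP s (c t) - sP s (c 0)) / (t - 0)) \<longlongrightarrow> D x) (at 0)"
        proof
          fix s assume s: "s \<in> sW (c 0)"
          have "((\<lambda>t. sP s (c t)) has_real_derivative sDP s (c 0) (Gv x)) (at 0)"
            by (rule sP_deriv[OF cd])
          moreover have "sDP s (c 0) (Gv x) = D x" using Deq[of s x] s c0 by simp
          ultimately show "((\<lambda>t. (sP s (c t) - sP s (c 0)) / (t - 0)) \<longlongrightarrow> D x) (at 0)"
            unfolding has_field_derivative_iff by simp
        qed
        show "\<forall>\<^sub>F t in at 0. \<exists>s\<in>sW (c 0). (sortlet \<alpha> (x + t *\<^sub>R b) - sortlet \<alpha> (x + 0 *\<^sub>R b)) / (t - 0)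
            = (sP s (c t) - sP s (c 0)) / (t - 0)"
          using sW_near[OF ctend]
        proof eventually_elim
          case (elim t)
          obtain s where s: "s \<in> sW (c t)" using sW_nonempty by blast
          then have s0: "s \<in> sW (c 0)" using elim by blast
          have "sortlet \<alpha> (x + t *\<^sub>R b) = sP s (c t)"
            using sortlet_eq[of s \<alpha> "x + t *\<^sub>R b"] s unfolding c_def by simp
          moreover have "sortlet \<alpha> (x + 0 *\<^sub>R b) = sP s (c 0)"
            using sortlet_eq[of s \<alpha> x] s0 c0 by simp
          ultimately show ?case using s0 by auto
        qed
      qed
    qed
    have contD: "isCont D x0" for x0
      unfolding isCont_def
    proof (rule glue_tendsto[where S="sW (\<alpha> x0)" and h="\<lambda>s r. sDP s (\<alpha> r) (Gv r)"])
      show "finite (sW (\<alpha> x0))" by (rule finite_sW)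
      show "\<forall>s\<in>sW (\<alpha> x0). ((\<lambda>r. sDP s (\<alpha> r) (Gv r)) \<longlongrightarrow> D x0) (at x0)"
      proof
        fix s assume s: "s \<in> sW (\<alpha> x0)"
        have "isCont (\<lambda>r. sDP s (\<alpha> r) (Gv r)) x0"
          unfolding sDP_def Gv_def vec_lambda_beta by (intro continuous_intros isC isCG b)
        moreover have "sDP s (\<alpha> x0) (Gv x0) = D x0" using Deq[OF s] by simp
        ultimately show "((\<lambda>r. sDP s (\<alpha> r) (Gv r)) \<longlongrightarrow> D x0) (at x0)"
          unfolding isCont_def by simp
      qed
      show "\<forall>\<^sub>F r in at x0. \<exists>s\<in>sW (\<alpha> x0). D r = sDP s (\<alpha> r) (Gv r)"
        using sW_near[OF tend[of x0]]
      proof eventually_elim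
        case (elim r)
        obtain s where "s \<in> sW (\<alpha> r)" using sW_nonempty by blast
        then show ?case using elim Deq[of s r] by blast
      qed
    qed
    have "continuous_on UNIV D" using contD by (simp add: continuous_at_imp_continuous_on)
    then show ?thesis using hasD by blast
  qed
  have "continuous_on UNIV (sortlet \<alpha>)" using contS by (simp add: continuous_at_imp_continuous_on)
  then show ?thesis using deriv by simp
qed

end
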